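(* Let $\alpha<0.3$ and let $\chi^2(k)_{1-\alpha}$ denote the $1-\alpha$ quantile of the $\chi^2(k)$ distribution. For a given $\beta$ with $\operatorname{rank}P(\beta)=k$, define the tests $\phi_{1,n}(\beta)=1$ if $(k\sigma_n^2(\beta))^{-1/2}(\mathrm{AR}(\beta)-k)>(2k)^{-1/2}(\chi^2(k)_{1-\alpha}-k)$ (and $0$ otherwise), and $\phi_{2,n}(\beta)=1$ if $\mathrm{AR}(\beta)>\chi^2(k)_{1-\alpha}$ (and $0$ otherwise). Then $\Pr(\phi_{1,n}(\beta)=1)\ge\Pr(\phi_{2,n}(\beta)=1)$.
   Context: GMM setting: independent observations $W_1,\dots,W_n$, moment functions $g_i(\beta)\in\mathbb R^k$, $G(\beta)$ the $n\times k$ matrix with rows $g_i(\beta)'$, $P(\beta)=G(\beta)(G(\beta)'G(\beta))^{-1}G(\beta)'$ with entries $P_{ij}(\beta)$, $\iota$ the $n$-vector of ones, $\mathrm{AR}(\beta)=\iota'P(\beta)\iota$, and $\sigma_n^2(\beta)=\frac{2}{k}\sum_{i\neq j}P_{ij}(\beta)^2$. *)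

theory Defs
  imports "HOL-Probability.Probability"
begin

definition chi2_density :: "nat \<Rightarrow> real \<Rightarrow> real" where
  "chi2_density k x =
     (if x > 0 then x powr (real k / 2 - 1) * exp (- x / 2) / (2 powr (real k / 2) * Gamma (real k / 2))
      else 0)"

definition chi2_CDF :: "nat \<Rightarrow> real \<Rightarrow> real" where
  "chi2_CDF k c = (\<integral>x\<in>{..c}. chi2_density k x \<partial>lborel)"

definition Pmat :: "real^'k^'n \<Rightarrow> real^'n^'n" where
  "Pmat G = G ** matrix_inv (transpose G ** G) ** transpose G"

text \<open>AR = iota' P iota.\<close>
definition AR_stat :: "real^'k^'n \<Rightarrow> real" where
  "AR_stat G = (\<Sum>i\<in>UNIV. \<Sum>j\<in>UNIV. Pmat G $ i $ j)"

definition sigma2_stat :: "real^'k^'n \<Rightarrow> real" where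
  "sigma2_stat (G :: real^'k^'n) =
     2 / real CARD('k) * (\<Sum>i\<in>UNIV. \<Sum>j\<in>UNIV - {i}. (Pmat G $ i $ j)\<^sup>2)"

definition phi1 :: "real \<Rightarrow> real^'k^'n \<Rightarrow> real" where
  "phi1 c (G :: real^'k^'n) =
     (let k = real CARD('k) in
      if (AR_stat G - k) / sqrt (k * sigma2_stat G) > (c - k) / sqrt (2 * k) then 1 else 0)"

definition phi2 :: "real \<Rightarrow> real^'k^'n \<Rightarrow> real" where
  "phi2 c (G :: real^'k^'n) = (if AR_stat G > c then 1 else 0)"

end

theory Submission
  imports Defs
begin


lemma Pmat_sumsq:
  fixes G :: "real^'k^'n"
  assumes r: "rank (Pmat G) = CARD('k)"
  shows "(\<Sum>i\<in>UNIV. \<Sum>j\<in>UNIV. (Pmat G $ i $ j)\<^sup>2) = real CARD('k)"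
proof -
  define A where "A = matrix_inv (transpose G ** G)"
  have P: "Pmat G = G ** A ** transpose G" by (simp add: Pmat_def A_def)
  have "rank (Pmat G) \<le> rank G"
    unfolding P by (metis rank_mul_le_left order_trans)
  moreover have "rank G \<le> CARD('k)" using rank_bound[of G] by simp
  ultimately have "rank G = CARD('k)" using r by linarith
  hence injG: "inj ((*v) G)" by (simp add: full_rank_injective)
  have inj2: "inj ((*v) (transpose G ** G))"
  proof (rule injI)
    fix x y assume "(transpose G ** G) *v x = (transpose G ** G) *v y"
    hence "(transpose G ** G) *v (x - y) = 0" by (simp add: matrix_vector_mult_diff_distrib)
    hence "(x - y) \<bullet> ((transpose G ** G) *v (x - y)) = 0" by simp
    hence "(G *v (x - y)) \<bullet> (G *v (x - y)) = 0"
      by (metis dot_lmul_matrix matrix_vector_mul_assoc transpose_matrix_vector inner_commute)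
    hence "G *v (x - y) = G *v 0" by simp
    hence "x - y = 0" using injG by (meson injD)
    thus "x = y" by simp
  qed
  then obtain B where "B ** (transpose G ** G) = mat 1"
    using matrix_left_invertible_injective by blast
  hence "\<exists>A'. (transpose G ** G) ** A' = mat 1 \<and> A' ** (transpose G ** G) = mat 1"
    using matrix_left_right_inverse by blast
  hence AI: "(transpose G ** G) ** A = mat 1 \<and> A ** (transpose G ** G) = mat 1"
    unfolding A_def matrix_inv_def by (rule someI_ex)
  have "(\<Sum>i\<in>UNIV. \<Sum>j\<in>UNIV. (Pmat G $ i $ j)\<^sup>2) = trace (Pmat G ** transpose (Pmat G))"
    by (simp add: trace_def matrix_matrix_mult_def transpose_def power2_eq_square)
  also have "Pmat G ** transpose (Pmat G) = G ** (A ** (transpose G ** G)) ** transpose A ** transpose G"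
    unfolding P by (simp add: matrix_transpose_mul matrix_mul_assoc)
  also have "\<dots> = G ** transpose A ** transpose G" using AI by (simp add: matrix_mul_rid)
  also have "trace \<dots> = trace (transpose A ** (transpose G ** G))"
    by (metis trace_mul_sym matrix_mul_assoc)
  also have "transpose A ** (transpose G ** G) = transpose ((transpose G ** G) ** A)"
    by (simp add: matrix_transpose_mul)
  also have "\<dots> = mat 1" using AI by simp
  finally show ?thesis by (simp add: trace_I)
qed




lemma cont_pw: "a > 0 \<Longrightarrow> continuous_on {0..X} (\<lambda>t::real. t powr a * exp (-t/2))"
  by (intro continuous_intros continuous_on_powr') auto

lemma parts:
  fixes a X :: real assumes a: "a > 0" and X: "X \<ge> 0"
  shows "((\<lambda>t. t powr (a-1) * exp(-t/2)) has_integral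
     (X powr a * exp(-X/2)/a + integral {0..X} (\<lambda>t. t powr a * exp(-t/2)) / (2*a))) {0..X}"
proof -
  let ?H = "\<lambda>t::real. t powr a * exp(-t/2)"
  have d: "(?H has_vector_derivative (a * t powr (a-1) * exp(-t/2) - t powr a * exp(-t/2)/2)) (at t)"
    if "t \<in> {0<..<X}" for t
    using that unfolding has_real_derivative_iff_has_vector_derivative[symmetric]
    by (auto intro!: derivative_eq_intros simp: field_simps)
  have 1: "((\<lambda>t. a * t powr (a-1) * exp(-t/2) - t powr a * exp(-t/2)/2) has_integral (?H X - ?H 0)) {0..X}"
    by (rule fundamental_theorem_of_calculus_interior[OF X cont_pw[OF a] d])
  have 2: "((\<lambda>t. t powr a * exp(-t/2)/2) has_integral (integral {0..X} ?H / 2)) {0..X}"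
    using has_integral_divide[OF integrable_integral[OF integrable_continuous_interval[OF cont_pw[OF a]]], of 2] by simp
  have 3: "((\<lambda>t. (1/a) * ((a * t powr (a-1) * exp(-t/2) - t powr a * exp(-t/2)/2) + t powr a * exp(-t/2)/2))
     has_integral (1/a) * ((?H X - ?H 0) + integral {0..X} ?H / 2)) {0..X}"
    by (rule has_integral_mult_right[OF has_integral_add[OF 1 2]])
  have e: "(\<lambda>t. (1/a) * ((a * t powr (a-1) * exp(-t/2) - t powr a * exp(-t/2)/2) + t powr a * exp(-t/2)/2))
      = (\<lambda>t. t powr (a-1) * exp(-t/2))" using a by (auto simp: field_simps)
  have v: "(1/a) * ((?H X - ?H 0) + integral {0..X} ?H / 2) = X powr a * exp(-X/2)/a + integral {0..X} ?H / (2*a)"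
    using a by (simp add: field_simps)
  show ?thesis using 3 unfolding e v .
qed




definition Dk :: "nat \<Rightarrow> real" where "Dk k = 2 powr (real k / 2) * Gamma (real k / 2)"
definition Fk :: "nat \<Rightarrow> real \<Rightarrow> real" where
  "Fk k X = integral {0..X} (\<lambda>t. t powr (real k/2 - 1) * exp(-t/2))"

lemma Dk_pos: "k \<ge> 1 \<Longrightarrow> Dk k > 0"
  unfolding Dk_def by (intro mult_pos_pos Gamma_real_pos) auto

lemma dens_eq: "t \<ge> 0 \<Longrightarrow> chi2_density k t = t powr (real k/2 - 1) * exp(-t/2) / Dk k"
  by (auto simp: chi2_density_def Dk_def)

lemma dens_nonneg: "k \<ge> 1 \<Longrightarrow> chi2_density k t \<ge> 0"
  using Dk_pos[of k] by (auto simp: chi2_density_def Dk_def)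

lemma dens_meas: "chi2_density k \<in> borel_measurable borel"
  unfolding chi2_density_def by measurable

lemma dens_integrable:
  assumes k: "k \<ge> 1" and X: "X \<ge> 0"
  shows "chi2_density k integrable_on {0..X}"
    "integral {0..X} (chi2_density k) = Fk k X / Dk k"
    "(\<lambda>t. t powr (real k/2 - 1) * exp(-t/2)) integrable_on {0..X}"
proof -
  have a: "real k / 2 > 0" using k by simp
  show i: "(\<lambda>t. t powr (real k/2 - 1) * exp(-t/2)) integrable_on {0..X}"
    using parts[OF a X] by blast
  have "((\<lambda>t. t powr (real k/2 - 1) * exp(-t/2) / Dk k) has_integral Fk k X / Dk k) {0..X}"
    unfolding Fk_def by (intro has_integral_divide integrable_integral i)
  moreover have "((\<lambda>t. t powr (real k/2 - 1) * exp(-t/2) / Dk k) has_integral Fk k X / Dk k) {0..X}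
     \<longleftrightarrow> (chi2_density k has_integral Fk k X / Dk k) {0..X}"
    by (intro has_integral_cong) (simp add: dens_eq)
  ultimately have h: "(chi2_density k has_integral Fk k X / Dk k) {0..X}" by simp
  thus "chi2_density k integrable_on {0..X}" by blast
  show "integral {0..X} (chi2_density k) = Fk k X / Dk k" using h by (rule integral_unique)
qed

lemma CDF_eq:
  assumes k: "k \<ge> 1" and X: "X \<ge> 0"
  shows "chi2_CDF k X = integral {0..X} (chi2_density k)"
proof -
  have ind: "(\<lambda>t. indicator {..X} t *\<^sub>R chi2_density k t) = (\<lambda>t. indicator {0..X} t *\<^sub>R chi2_density k t)"
    by (auto simp: indicator_def chi2_density_def)
  have "chi2_density k absolutely_integrable_on {0..X}"
    by (rule nonnegative_absolutely_integrable_1[OF dens_integrable(1)[OF k X] dens_nonneg[OF k]])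
  hence "integrable lebesgue (\<lambda>t. indicator {0..X} t *\<^sub>R chi2_density k t)"
    by (simp add: absolutely_integrable_on_def set_integrable_def)
  hence si: "set_integrable lborel {0..X} (chi2_density k)"
    unfolding set_integrable_def
    by (subst integrable_completion[symmetric]) (use dens_meas in \<open>auto intro!: borel_measurable_times\<close>)
  have "chi2_CDF k X = (LINT t:{0..X}|lborel. chi2_density k t)"
    unfolding chi2_CDF_def set_lebesgue_integral_def ind ..
  also have "\<dots> = integral {0..X} (chi2_density k)"
    by (rule set_borel_integral_eq_integral(2)[OF si])
  finally show ?thesis .
qed

lemma CDF_neg: "X < 0 \<Longrightarrow> chi2_CDF k X = 0"
proof -
  assume X: "X < 0"
  have "(\<lambda>t. indicator {..X} t *\<^sub>R chi2_density k t) = (\<lambda>t. 0)"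
    using X by (auto simp: indicator_def chi2_density_def)
  thus ?thesis unfolding chi2_CDF_def set_lebesgue_integral_def by simp
qed




lemma pw_max:
  fixes a t :: real assumes a: "a > 0" and t: "t \<ge> 0"
  shows "t powr a * exp(-t/2) \<le> (2*a) powr a * exp(-a)"
proof (cases "t = 0")
  case True thus ?thesis using a by simp
next
  case False
  hence t0: "t > 0" using t by simp
  have "ln (t/(2*a)) \<le> t/(2*a) - 1" using t0 a by (intro ln_le_minus_one) auto
  hence "a * ln (t/(2*a)) \<le> a * (t/(2*a) - 1)" using a by (intro mult_left_mono) auto
  also have "a * (t/(2*a) - 1) = t/2 - a" using a by (simp add: field_simps)
  finally have "a * ln (t/(2*a)) \<le> t/2 - a" .
  hence "(t/(2*a)) powr a \<le> exp (t/2 - a)"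
    using t0 a by (simp add: powr_def)
  hence "(2*a) powr a * (t/(2*a)) powr a \<le> (2*a) powr a * exp (t/2 - a)"
    by (intro mult_left_mono) auto
  moreover have "(2*a) powr a * (t/(2*a)) powr a = t powr a"
    using t0 a by (simp add: powr_mult[symmetric])
  ultimately have "t powr a \<le> (2*a) powr a * exp (t/2 - a)" by simp
  hence "t powr a * exp(-t/2) \<le> (2*a) powr a * exp (t/2 - a) * exp(-t/2)"
    by (intro mult_right_mono) auto
  also have "\<dots> = (2*a) powr a * exp(-a)" by (simp add: exp_add[symmetric])
  finally show ?thesis .
qed

lemma step:
  assumes k: "k \<ge> 1"
  shows "chi2_CDF (k+2) (real (k+2)) \<le> chi2_CDF k (real k)"
proof -
  define a where "a = real k / 2"
  have a: "a > 0" using k by (simp add: a_def)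
  let ?g = "\<lambda>t::real. t powr a * exp(-t/2)"
  have e1: "real (k+2) / 2 - 1 = a" by (simp add: a_def field_simps)
  have Fk2: "Fk (k+2) X = integral {0..X} ?g" for X unfolding Fk_def e1 ..
  have e2: "real k = 2*a" by (simp add: a_def)
  have pk: "Fk k (real k) = (real k) powr a * exp(-real k/2)/a + Fk (k+2) (real k) / (2*a)"
    using integral_unique[OF parts[OF a, of "real k"]] unfolding Fk2 by (simp add: Fk_def a_def)
  have D2: "Dk (k+2) = 2*a * Dk k"
  proof -
    have "real (k+2)/2 = a + 1" by (simp add: a_def)
    hence "Dk (k+2) = 2 powr (a+1) * Gamma (a+1)" unfolding Dk_def by metis
    also have "\<dots> = 2 * 2 powr a * (a * Gamma a)"
    proof -
      have "a \<notin> \<int>\<^sub>\<le>\<^sub>0" using a nonpos_Ints_nonpos by force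
      thus ?thesis by (simp add: powr_add Gamma_plus1)
    qed
    finally show ?thesis by (simp add: Dk_def a_def)
  qed
  have intg: "?g integrable_on {0..real k + 2}"
    by (rule integrable_continuous_interval[OF cont_pw[OF a]])
  have comb: "Fk (k+2) (real k + 2) = Fk (k+2) (real k) + integral {real k..real k + 2} ?g"
    unfolding Fk2 by (rule Henstock_Kurzweil_Integration.integral_combine[symmetric, OF _ _ intg]) auto
  have "integral {real k..real k + 2} ?g \<le> integral {real k..real k + 2} (\<lambda>t. (2*a) powr a * exp(-a))"
    by (rule integral_le[OF integrable_on_subinterval[OF intg]]) (use pw_max[OF a] in auto)
  also have "\<dots> = 2 * ((2*a) powr a * exp(-a))" by simp
  finally have bd: "integral {real k..real k + 2} ?g \<le> 2 * ((real k) powr a * exp(-real k/2))"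
    by (simp add: e2)
  have Dp: "Dk k > 0" using Dk_pos k by simp
  have "chi2_CDF (k+2) (real (k+2)) = Fk (k+2) (real k + 2) / Dk (k+2)"
    using CDF_eq[of "k+2" "real (k+2)"] dens_integrable(2)[of "k+2" "real (k+2)"] by (simp add: add.commute)
  also have "\<dots> \<le> (Fk (k+2) (real k) + 2 * ((real k) powr a * exp(-real k/2))) / (2*a*Dk k)"
    unfolding comb D2 using bd a Dp by (intro divide_right_mono) auto
  also have "\<dots> = Fk k (real k) / Dk k"
    unfolding pk using a Dp by (simp add: field_simps)
  also have "\<dots> = chi2_CDF k (real k)"
    using CDF_eq[of k "real k"] dens_integrable(2)[of k "real k"] k by simp
  finally show ?thesis .
qed




lemma exp_neg_le: "x \<ge> 0 \<Longrightarrow> exp (-x) \<le> 1 - x + x^2/2" for x :: real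
proof -
  assume x: "x \<ge> 0"
  have q: "1 + x + x^2/2 > 0" using x by (simp add: add_pos_nonneg)
  have "1 + x + x^2/2 \<le> exp x" using exp_lower_Taylor_quadratic[OF x] .
  hence "exp (-x) \<le> 1 / (1 + x + x^2/2)" using q by (simp add: exp_minus field_simps)
  also have "\<dots> \<le> 1 - x + x^2/2"
  proof -
    have "(1 + x + x^2/2) * (1 - x + x^2/2) = 1 + x^4/4" by (simp add: algebra_simps power2_eq_square power4_eq_xxxx)
    hence "1 \<le> (1 + x + x^2/2) * (1 - x + x^2/2)" by simp
    thus ?thesis using q by (simp add: field_simps)
  qed
  finally show ?thesis .
qed

lemma base2: "chi2_CDF 2 2 < 7/10"
proof -
  have ftc: "((\<lambda>t. exp(-t/2)) has_integral ((-2*exp(-2/2)) - (-2*exp(-0/2)))) {0..2::real}"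
    by (rule fundamental_theorem_of_calculus_interior)
       (auto intro!: continuous_intros derivative_eq_intros simp: has_real_derivative_iff_has_vector_derivative[symmetric])
  have i2: "(\<lambda>t. t powr (real 2/2 - 1) * exp(-t/2)) integrable_on {0..2::real}"
    using dens_integrable(3)[of 2 2] by simp
  have "Fk 2 2 \<le> integral {0..2} (\<lambda>t. exp(-t/2))"
    unfolding Fk_def by (rule integral_le[OF i2]) (use ftc in \<open>auto simp: powr_def integrable_on_def\<close>)
  also have "\<dots> = 2 - 2*exp(-1)" using integral_unique[OF ftc] by simp
  finally have F: "Fk 2 2 \<le> 2 - 2*exp(-1)" .
  have D: "Dk 2 = 2" by (simp add: Dk_def)
  have "chi2_CDF 2 2 = Fk 2 2 / Dk 2" using CDF_eq[of 2 2] dens_integrable(2)[of 2 2] by simp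
  also have "\<dots> \<le> 1 - exp(-1)" using F D by simp
  also have "\<dots> < 7/10"
  proof -
    have "exp (1::real) < 272/100" by (rule e_less_272)
    hence "exp (-1::real) > 100/272" by (simp add: exp_minus field_simps)
    thus ?thesis by simp
  qed
  finally show ?thesis .
qed

lemma base1: "chi2_CDF 1 1 < 7/10"
proof -
  have a: "(1/2::real) > 0" by simp
  let ?g = "\<lambda>t::real. t powr (1/2) * exp(-t/2)"
  let ?h = "\<lambda>t::real. t powr (1/2) - t powr (3/2) / 2 + t powr (5/2) / 8"
  have F1: "Fk 1 1 = 1 powr (1/2) * exp(-1/2) / (1/2) + integral {0..1} ?g / (2*(1/2))"
    using integral_unique[OF parts[OF a, of 1]] by (simp add: Fk_def)
  have hint: "(?h has_integral (2/3 - (2/5)/2 + (2/7)/8)) {0..1}"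
  proof -
    have p1: "((\<lambda>t::real. t powr (1/2)) has_integral 2/3) {0..1}"
      using has_integral_powr_from_0[of "1/2" 1] by simp
    have p3: "((\<lambda>t::real. t powr (3/2)) has_integral 2/5) {0..1}"
      using has_integral_powr_from_0[of "3/2" 1] by simp
    have p5: "((\<lambda>t::real. t powr (5/2)) has_integral 2/7) {0..1}"
      using has_integral_powr_from_0[of "5/2" 1] by simp
    show ?thesis
      by (intro has_integral_add has_integral_diff has_integral_divide p1 p3 p5)
  qed
  have gle: "?g t \<le> ?h t" if t: "t \<in> {0..1}" for t
  proof (cases "t = 0")
    case True thus ?thesis by simp
  next
    case False
    hence t0: "t > 0" using t by simp
    have e3: "t powr (3/2) = t powr (1/2) * t" using t0 powr_add[of t "1/2" 1] by simp
    have e5: "t powr (5/2) = t powr (1/2) * t^2" using t0 powr_add[of t "1/2" 2]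
      by (simp add: power2_eq_square)
    have "exp(-t/2) \<le> 1 - t/2 + (t/2)^2/2" using exp_neg_le[of "t/2"] t by simp
    hence "?g t \<le> t powr (1/2) * (1 - t/2 + (t/2)^2/2)" by (intro mult_left_mono) auto
    also have "\<dots> = ?h t" unfolding e3 e5 by (simp add: algebra_simps power2_eq_square)
    finally show ?thesis .
  qed
  have gi: "?g integrable_on {0..1}"
    by (rule integrable_continuous_interval[OF cont_pw]) simp
  have "integral {0..1} ?g \<le> integral {0..1} ?h"
    by (rule integral_le[OF gi]) (use hint gle in auto)
  also have "\<dots> = 211/420" using integral_unique[OF hint] by simp
  finally have I: "integral {0..1} ?g \<le> 211/420" .
  have ehalf: "exp(-1/2::real) \<le> 607/1000"
  proof -
    have "\<bar>exp 1 - 5837465777 / 2147483648\<bar> \<le> (inverse(2 ^ 32)::real)" by (rule e_approx_32)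
    hence "5837465777 / 2147483648 - inverse(2 ^ 32) \<le> exp (1::real)" by (simp only: abs_le_iff) linarith
    hence "exp (1::real) \<ge> 2718/1000" by simp
    hence "exp (-1::real) \<le> 1000/2718" by (simp add: exp_minus field_simps)
    moreover have "exp(-1::real) = exp(-1/2)^2" by (simp add: power2_eq_square exp_add[symmetric])
    ultimately have "exp(-1/2::real)^2 \<le> 1000/2718" by (simp only:)
    also have "(1000/2718::real) \<le> (607/1000)^2" by (simp add: power2_eq_square)
    finally have "exp(-1/2::real)^2 \<le> (607/1000)^2" .
    thus ?thesis by (rule power2_le_imp_le) simp
  qed
  have Fb: "Fk 1 1 \<le> 2*(607/1000) + 211/420" using F1 I ehalf by simp
  have D: "Dk 1 = sqrt 2 * sqrt pi" by (simp add: Dk_def Gamma_one_half_real powr_half_sqrt)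
  have Dp: "Dk 1 > 0" using Dk_pos[of 1] by simp
  have sq: "(2*(607/1000) + 211/420) < 7/10 * (sqrt 2 * sqrt pi)"
  proof -
    have "pi \<ge> 3.14" using pi_approx by simp
    have r: "(7/10 * (sqrt 2 * sqrt pi))^2 = 49/50 * pi" by (simp only: power_mult_distrib real_sqrt_pow2 pi_ge_zero) (simp add: power2_eq_square)
    have "(2*(607/1000) + 211/420 :: real)^2 < 49/50 * 3.14" by (simp add: power2_eq_square)
    also have "\<dots> \<le> 49/50 * pi" using \<open>pi \<ge> 3.14\<close> by simp
    finally have "(2*(607/1000) + 211/420 :: real)^2 < (7/10 * (sqrt 2 * sqrt pi))^2" unfolding r .
    thus ?thesis by (rule power2_less_imp_less) simp
  qed
  have "chi2_CDF 1 1 = Fk 1 1 / Dk 1" using CDF_eq[of 1 1] dens_integrable(2)[of 1 1] by simp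
  also have "\<dots> < 7/10" using Fb sq Dp D by (simp add: divide_less_eq)
  finally show ?thesis .
qed

lemma CDF_k_k: "k \<ge> 1 \<Longrightarrow> chi2_CDF k (real k) < 7/10"
proof (induction k rule: nat_less_induct)
  case (1 k)
  show ?case
  proof (cases "k \<le> 2")
    case True
    then consider "k = 1" | "k = 2" using 1(2) by linarith
    thus ?thesis using base1 base2 by cases auto
  next
    case False
    define m where "m = k - 2"
    have m: "k = m + 2" "m \<ge> 1" using False by (auto simp: m_def)
    have "chi2_CDF m (real m) < 7/10" using 1(1) m by auto
    thus ?thesis using step[OF m(2)] unfolding m(1) by linarith
  qed
qed




lemma c_gt_k:
  assumes k: "k \<ge> 1" and al: "\<alpha> < 0.3" and c: "chi2_CDF k c = 1 - \<alpha>"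
  shows "c > real k"
proof (rule ccontr)
  assume "\<not> c > real k"
  hence ck: "c \<le> real k" by simp
  show False
  proof (cases "c < 0")
    case True thus False using CDF_neg[OF True, of k] c al by simp
  next
    case False
    hence c0: "c \<ge> 0" by simp
    have "chi2_CDF k c = integral {0..c} (chi2_density k)" by (rule CDF_eq[OF k c0])
    also have "\<dots> \<le> integral {0..real k} (chi2_density k)"
      by (rule integral_subset_le) (use ck dens_integrable(1)[OF k c0] dens_integrable(1)[OF k, of "real k"] dens_nonneg[OF k] in auto)
    also have "\<dots> = chi2_CDF k (real k)" using CDF_eq[OF k, of "real k"] by simp
    also have "\<dots> < 7/10" by (rule CDF_k_k[OF k])
    finally show False using c al by simp
  qed
qed

lemma pointwise:
  fixes G :: "real^'k^'n"
  assumes r: "rank (Pmat G) = CARD('k)" and s: "sigma2_stat G > 0"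
    and ck: "c > real CARD('k)" and p2: "phi2 c G = 1"
  shows "phi1 c G = 1"
proof -
  define k where "k = real CARD('k)"
  have kp: "k > 0" by (simp add: k_def)
  have AR: "AR_stat G > c" using p2 by (simp add: phi2_def split: if_splits)
  have "(\<Sum>i\<in>UNIV. \<Sum>j\<in>UNIV - {i}. (Pmat G $ i $ j)\<^sup>2) \<le> (\<Sum>i\<in>UNIV. \<Sum>j\<in>UNIV. (Pmat G $ i $ j)\<^sup>2)"
    by (intro sum_mono sum_mono2) auto
  hence "(\<Sum>i\<in>UNIV. \<Sum>j\<in>UNIV - {i}. (Pmat G $ i $ j)\<^sup>2) \<le> k"
    using Pmat_sumsq[OF r] by (simp add: k_def)
  hence s2: "sigma2_stat G \<le> 2" unfolding sigma2_stat_def using kp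
    by (simp add: k_def[symmetric] field_simps)
  have ks: "k * sigma2_stat G > 0" using kp s by simp
  have ks2: "k * sigma2_stat G \<le> 2 * k" using s2 kp by simp
  have sq: "0 < sqrt (k * sigma2_stat G)" "sqrt (k * sigma2_stat G) \<le> sqrt (2*k)"
    using ks ks2 by auto
  have ck': "c - k > 0" using ck by (simp add: k_def)
  have "(c - k) / sqrt (2*k) < (AR_stat G - k) / sqrt (2*k)"
    using AR kp by (intro divide_strict_right_mono) auto
  also have "\<dots> \<le> (AR_stat G - k) / sqrt (k * sigma2_stat G)"
    using sq AR ck' by (intro divide_left_mono) auto
  finally show ?thesis unfolding phi1_def Let_def k_def by simp
qed


theorem corollary1:
  fixes M :: "'a measure" and N :: "'w measure"
    and W :: "'n::finite \<Rightarrow> 'a \<Rightarrow> 'w"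
    and g :: "'n \<Rightarrow> 'b \<Rightarrow> 'w \<Rightarrow> real^'k"
    and \<beta> :: 'b and \<alpha> c :: real
  defines "G \<equiv> \<lambda>\<omega>. (\<chi> i. g i \<beta> (W i \<omega>)) :: real^'k^'n"
  assumes "prob_space M"
    and "prob_space.indep_vars M (\<lambda>_. N) W UNIV"
    and "\<And>i. g i \<beta> \<in> borel_measurable N"
    and "0 < \<alpha>" and "\<alpha> < 0.3"
    and "chi2_CDF CARD('k) c = 1 - \<alpha>"
    and "\<And>\<omega>. \<omega> \<in> space M \<Longrightarrow> rank (Pmat (G \<omega>)) = CARD('k)"
    and "\<And>\<omega>. \<omega> \<in> space M \<Longrightarrow> sigma2_stat (G \<omega>) > 0"
    and "{\<omega> \<in> space M. phi1 c (G \<omega>) = 1} \<in> sets M"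
    and "{\<omega> \<in> space M. phi2 c (G \<omega>) = 1} \<in> sets M"
  shows "measure M {\<omega> \<in> space M. phi1 c (G \<omega>) = 1}
           \<ge> measure M {\<omega> \<in> space M. phi2 c (G \<omega>) = 1}"
proof -
  have ck: "c > real CARD('k)"
    by (rule c_gt_k[of "CARD('k)" \<alpha>]) (use assms in auto)
  have sub: "{\<omega> \<in> space M. phi2 c (G \<omega>) = 1} \<subseteq> {\<omega> \<in> space M. phi1 c (G \<omega>) = 1}"
    using pointwise[OF _ _ ck] assms by auto
  interpret prob_space M by fact
  show ?thesis by (rule finite_measure_mono[OF sub]) (use assms in auto)
qed

end
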